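(* Let $M=\{1,\dots,m\}$ carry the measure $\mu$ with atoms of positive masses $\mu_1,\dots,\mu_m$, and $N=\{1,\dots,n\}$ the measure $\nu$ with atoms of positive masses $\nu_1,\dots,\nu_n$. Let $t>0$ and $1\le q<p\le\infty$, $\alpha=1/q-1/p$, and $C(p,q)=(1-q/p)^{1/q}$. For real $m\times n$ matrices $a$ let $\|a\|$ be the $L^{p,\infty}(\mu)$ quasi-norm of $i\mapsto\big(\sum_{j\in N}|a(i,j)|^q\nu_j\big)^{1/q}$, let $\|a\|^{\top}$ be the $L^{p,\infty}(\nu)$ quasi-norm of $j\mapsto\big(\sum_{i\in M}|a(i,j)|^q\mu_i\big)^{1/q}$, let $\|a\|_{\ell^q}=\big(\sum_{i,j}|a(i,j)|^q\mu_i\nu_j\big)^{1/q}$, and $$|||a|||_{p,q,t}=\sup_{E,F}\big(\mu(E)^{\alpha}\vee t^{-1}\nu(F)^{\alpha}\big)^{-1}\|1_{E\times F}\cdot a\|_{\ell^q},$$ the supremum over nonempty $E\subset M$, $F\subset N$. Let $K_{p,q,t}(a)=\inf\{\|b\|+t\|c\|^{\top}: a=b+c\}$ (the $K_t$-functional of the couple $\ell^{p,\infty}_m(\ell^q_n),\ \ell^{p,\infty}_n(\ell^q_m)$). Then for every matrix $a$ $$C(p,q)\,|||a|||_{p,q,t}\le K_{p,q,t}(a)\le 2\,|||a|||_{p,q,t}.$$ More precisely, if $|||a|||_{p,q,t}\le1$ there are $A,B$ with $M\times N=A\cup B$, $A\cap B=\emptyset$, and $\|1_A\cdot a\|\le1$,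 $\|1_B\cdot a\|^{\top}\le1/t$.
   Context: For a nonnegative function $g$ on a measure space, $g^*(s)=\inf\{\lambda>0:\text{measure}\{g>\lambda\}\le s\}$ is its nonincreasing rearrangement and $\|g\|_{L^{p,\infty}}=\sup_{s>0}s^{1/p}g^*(s)$ (for $p=\infty$ this is the sup norm). $1_S$ is the indicator of $S$, $\cdot$ is entrywise multiplication, $u\vee v=\max(u,v)$. *)

theory Defs
  imports Complex_Main "HOL-Library.Extended_Real"
begin

definition rearr :: "(nat \<Rightarrow> real) \<Rightarrow> nat set \<Rightarrow> (nat \<Rightarrow> real) \<Rightarrow> real \<Rightarrow> real" where
  "rearr mu S g s = Inf {lam. lam > 0 \<and> (\<Sum>i\<in>{i\<in>S. g i > lam}. mu i) \<le> s}"

definition weak_norm :: "(nat \<Rightarrow> real) \<Rightarrow> nat set \<Rightarrow> ereal \<Rightarrow> (nat \<Rightarrow> real) \<Rightarrow> real" where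
  "weak_norm mu S p g =
     (if p = \<infinity> then (SUP i\<in>S. g i)
      else (SUP s\<in>{0<..}. s powr (1 / real_of_ereal p) * rearr mu S g s))"

definition inv_exp :: "ereal \<Rightarrow> real" where
  "inv_exp p = (if p = \<infinity> then 0 else 1 / real_of_ereal p)"

definition mask :: "(nat \<times> nat) set \<Rightarrow> (nat \<Rightarrow> nat \<Rightarrow> real) \<Rightarrow> nat \<Rightarrow> nat \<Rightarrow> real" where
  "mask A a = (\<lambda>i j. if (i, j) \<in> A then a i j else 0)"

definition row_norm :: "nat \<Rightarrow> nat \<Rightarrow> (nat \<Rightarrow> real) \<Rightarrow> (nat \<Rightarrow> real) \<Rightarrow> ereal \<Rightarrow> real
    \<Rightarrow> (nat \<Rightarrow> nat \<Rightarrow> real) \<Rightarrow> real" where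
  "row_norm m n mu nu p q a =
     weak_norm mu {1..m} p (\<lambda>i. (\<Sum>j\<in>{1..n}. \<bar>a i j\<bar> powr q * nu j) powr (1 / q))"

definition col_norm :: "nat \<Rightarrow> nat \<Rightarrow> (nat \<Rightarrow> real) \<Rightarrow> (nat \<Rightarrow> real) \<Rightarrow> ereal \<Rightarrow> real
    \<Rightarrow> (nat \<Rightarrow> nat \<Rightarrow> real) \<Rightarrow> real" where
  "col_norm m n mu nu p q a =
     weak_norm nu {1..n} p (\<lambda>j. (\<Sum>i\<in>{1..m}. \<bar>a i j\<bar> powr q * mu i) powr (1 / q))"

definition lq_norm :: "nat \<Rightarrow> nat \<Rightarrow> (nat \<Rightarrow> real) \<Rightarrow> (nat \<Rightarrow> real) \<Rightarrow> real
    \<Rightarrow> (nat \<Rightarrow> nat \<Rightarrow> real) \<Rightarrow> real" where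
  "lq_norm m n mu nu q a =
     (\<Sum>i\<in>{1..m}. \<Sum>j\<in>{1..n}. \<bar>a i j\<bar> powr q * mu i * nu j) powr (1 / q)"

definition triple_norm :: "nat \<Rightarrow> nat \<Rightarrow> (nat \<Rightarrow> real) \<Rightarrow> (nat \<Rightarrow> real) \<Rightarrow> ereal \<Rightarrow> real
    \<Rightarrow> real \<Rightarrow> (nat \<Rightarrow> nat \<Rightarrow> real) \<Rightarrow> real" where
  "triple_norm m n mu nu p q t a =
     (let alph = 1 / q - inv_exp p in
      SUP EF\<in>{(E, F). E \<subseteq> {1..m} \<and> E \<noteq> {} \<and> F \<subseteq> {1..n} \<and> F \<noteq> {}}.
        lq_norm m n mu nu q (mask (fst EF \<times> snd EF) a) /
        max ((\<Sum>i\<in>fst EF. mu i) powr alph) ((\<Sum>j\<in>snd EF. nu j) powr alph / t))"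

definition K_func :: "nat \<Rightarrow> nat \<Rightarrow> (nat \<Rightarrow> real) \<Rightarrow> (nat \<Rightarrow> real) \<Rightarrow> ereal \<Rightarrow> real
    \<Rightarrow> real \<Rightarrow> (nat \<Rightarrow> nat \<Rightarrow> real) \<Rightarrow> real" where
  "K_func m n mu nu p q t a =
     Inf {row_norm m n mu nu p q b + t * col_norm m n mu nu p q c | b c.
            \<forall>i\<in>{1..m}. \<forall>j\<in>{1..n}. a i j = b i j + c i j}"

definition Cpq :: "ereal \<Rightarrow> real \<Rightarrow> real" where
  "Cpq p q = (1 - q * inv_exp p) powr (1 / q)"

end

theory Submission
  imports Defs "HOL-Analysis.Analysis"
begin


lemma maxG:
  assumes "finite S"
  shows "Max (insert 0 (g ` S)) + 1 > (0::real)" "i \<in> S \<Longrightarrow> g i < Max (insert 0 (g ` S)) + 1"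
proof -
  have "0 \<le> Max (insert 0 (g ` S))" using assms by (intro Max_ge) auto
  then show "Max (insert 0 (g ` S)) + 1 > (0::real)" by simp
  show "i \<in> S \<Longrightarrow> g i < Max (insert 0 (g ` S)) + 1"
  proof -
    assume "i \<in> S"
    then have "g i \<le> Max (insert 0 (g ` S))" using assms by (intro Max_ge) auto
    then show ?thesis by simp
  qed
qed

lemma rearr_nonneg:
  assumes "finite S" "s \<ge> 0"
  shows "rearr mu S g s \<ge> 0"
proof -
  define G where "G = Max (insert 0 (g ` S)) + 1"
  have G: "G > 0" "\<forall>i\<in>S. g i < G" using maxG[OF assms(1)] by (auto simp: G_def)
  have E0: "{i\<in>S. G < g i} = {}" using G by force
  have "G \<in> {lam. lam > 0 \<and> (\<Sum>i\<in>{i\<in>S. g i > lam}. mu i) \<le> s}"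
    using G assms by (simp add: E0)
  then show ?thesis unfolding rearr_def
    by (intro cInf_greatest) auto
qed

lemma rearr_le:
  assumes "lam > 0" "(\<Sum>i\<in>{i\<in>S. g i > lam}. mu i) \<le> s"
  shows "rearr mu S g s \<le> lam"
  unfolding rearr_def
  by (rule cInf_lower) (use assms in \<open>auto intro!: bdd_belowI[where m=0]\<close>)

lemma rearr_ge:
  assumes "finite S" "s \<ge> 0"
    and "\<And>lam. lam > 0 \<Longrightarrow> (\<Sum>i\<in>{i\<in>S. g i > lam}. mu i) \<le> s \<Longrightarrow> v \<le> lam"
  shows "v \<le> rearr mu S g s"
proof -
  define G where "G = Max (insert 0 (g ` S)) + 1"
  have G: "G > 0" "\<forall>i\<in>S. g i < G" using maxG[OF assms(1)] by (auto simp: G_def)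
  have E0: "{i\<in>S. G < g i} = {}" using G by force
  have "G \<in> {lam. lam > 0 \<and> (\<Sum>i\<in>{i\<in>S. g i > lam}. mu i) \<le> s}"
    using G assms by (simp add: E0)
  then show ?thesis unfolding rearr_def
    by (intro cInf_greatest) (use assms in auto)
qed

lemma weak_bdd:
  assumes fin: "finite S" and mu: "\<forall>i\<in>S. mu i > 0" and r: "r > 0"
  shows "bdd_above ((\<lambda>s. s powr (1 / r) * rearr mu S g s) ` {0<..})"
proof -
  define G where "G = Max (insert 0 (g ` S)) + 1"
  have G: "G > 0" "\<forall>i\<in>S. g i < G" using maxG[OF fin] by (auto simp: G_def)
  define T where "T = (\<Sum>i\<in>S. mu i)"
  have T: "T \<ge> 0" using mu unfolding T_def by (meson less_imp_le sum_nonneg)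
  show ?thesis
  proof (rule bdd_aboveI2)
    fix s :: real assume "s \<in> {0<..}"
    hence s: "s > 0" by simp
    have rG: "rearr mu S g s \<le> G"
    proof (rule rearr_le)
      have E0: "{i\<in>S. G < g i} = {}" using G by force
      show "(\<Sum>i\<in>{i\<in>S. g i > G}. mu i) \<le> s" using s by (simp add: E0)
    qed (use G in auto)
    have r0: "rearr mu S g s \<ge> 0" using rearr_nonneg[OF fin] s by simp
    show "s powr (1 / r) * rearr mu S g s \<le> T powr (1/r) * G"
    proof (cases "s \<le> T")
      case True
      then show ?thesis
        using rG r0 G s r by (intro mult_mono powr_mono2) auto
    next
      case False
      have "rearr mu S g s \<le> 0"
      proof (rule dense_ge)
        fix lam :: real assume l: "0 < lam"
        have "(\<Sum>i\<in>{i\<in>S. g i > lam}. mu i) \<le> T"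
          unfolding T_def using fin mu by (intro sum_mono2) auto
        then show "rearr mu S g s \<le> lam"
          using False l by (intro rearr_le) auto
      qed
      hence "s powr (1 / r) * rearr mu S g s \<le> 0"
        by (simp add: mult_nonneg_nonpos)
      also have "0 \<le> T powr (1/r) * G" using G by simp
      finally show ?thesis .
    qed
  qed
qed

lemma weak_norm_le:
  assumes fin: "finite S" "S \<noteq> {}" and mu: "\<forall>i\<in>S. mu i > 0"
    and pp: "p = \<infinity> \<or> 0 < real_of_ereal p" and W: "W \<ge> 0"
    and H: "\<And>E. E \<subseteq> S \<Longrightarrow> E \<noteq> {} \<Longrightarrow> \<exists>i\<in>E. g i \<le> W * (\<Sum>i\<in>E. mu i) powr (- inv_exp p)"
  shows "weak_norm mu S p g \<le> W"
proof (cases "p = \<infinity>")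
  case True
  have "g i \<le> W" if "i \<in> S" for i
    using H[of "{i}"] that mu by (auto simp: True inv_exp_def)
  then show ?thesis using fin by (simp add: weak_norm_def True cSUP_least)
next
  case False
  define r where "r = real_of_ereal p"
  have r: "r > 0" using pp False r_def by auto
  have ie: "inv_exp p = 1 / r" using False by (simp add: inv_exp_def r_def)
  have "s powr (1 / r) * rearr mu S g s \<le> W" if s: "s > 0" for s
  proof -
    define l0 where "l0 = W * s powr (- (1/r))"
    have l0: "l0 \<ge> 0" using W by (simp add: l0_def)
    have "rearr mu S g s \<le> l0"
    proof (rule dense_ge)
      fix lam assume lam: "l0 < lam"
      have "(\<Sum>i\<in>{i\<in>S. g i > lam}. mu i) \<le> s"
      proof (rule ccontr)
        assume "\<not> ?thesis"
        hence gt: "(\<Sum>i\<in>{i\<in>S. g i > lam}. mu i) > s" by simp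
        have ne: "{i\<in>S. g i > lam} \<noteq> {}"
        proof
          assume e: "{i\<in>S. g i > lam} = {}"
          have "(\<Sum>i\<in>{i\<in>S. g i > lam}. mu i) = 0" by (simp only: e sum.empty)
          then show False using gt s by simp
        qed
        obtain i where i: "i \<in> {i\<in>S. g i > lam}"
          and gi: "g i \<le> W * (\<Sum>i\<in>{i\<in>S. g i > lam}. mu i) powr (- inv_exp p)"
          using H[OF _ ne] by blast
        have "(\<Sum>i\<in>{i\<in>S. g i > lam}. mu i) powr (- (1/r)) \<le> s powr (- (1/r))"
          using gt s r by (intro powr_mono2') auto
        hence "W * (\<Sum>i\<in>{i\<in>S. g i > lam}. mu i) powr (- inv_exp p) \<le> l0"
          unfolding l0_def ie using W by (intro mult_left_mono) auto
        then show False using gi i lam by auto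
      qed
      then show "rearr mu S g s \<le> lam" using lam l0 by (intro rearr_le) auto
    qed
    hence "s powr (1 / r) * rearr mu S g s \<le> s powr (1 / r) * l0"
      by (intro mult_left_mono) auto
    also have "\<dots> = W * (s powr (1/r) * s powr (- (1/r)))" by (simp add: l0_def)
    also have "\<dots> = W" using s by (simp flip: powr_add)
    finally show ?thesis .
  qed
  then have "(SUP x\<in>{0<..}. x powr (1 / r) * rearr mu S g x) \<le> W"
    by (intro cSUP_least) auto
  then show ?thesis using False
    by (simp add: weak_norm_def r_def[symmetric])
qed

lemma weak_norm_ge:
  assumes fin: "finite S" "S \<noteq> {}" and mu: "\<forall>i\<in>S. mu i > 0"
    and pp: "p = \<infinity> \<or> 0 < real_of_ereal p" and g: "\<forall>i\<in>S. g i \<ge> 0"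
  shows "weak_norm mu S p g \<ge> 0"
    and "E \<subseteq> S \<Longrightarrow> E \<noteq> {} \<Longrightarrow> \<exists>i\<in>E. g i \<le> weak_norm mu S p g * (\<Sum>i\<in>E. mu i) powr (- inv_exp p)"
proof -
  have A: "weak_norm mu S p g \<ge> 0 \<and> (E \<subseteq> S \<longrightarrow> E \<noteq> {} \<longrightarrow> (\<exists>i\<in>E. g i \<le> weak_norm mu S p g * (\<Sum>i\<in>E. mu i) powr (- inv_exp p)))"
  proof (cases "p = \<infinity>")
    case True
    have le: "g i \<le> weak_norm mu S p g" if "i \<in> S" for i
      using fin that by (simp add: weak_norm_def True cSUP_upper)
    obtain i0 where "i0 \<in> S" using fin by auto
    hence nn: "weak_norm mu S p g \<ge> 0" using le g by force
    show ?thesis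
    proof (intro conjI impI nn)
      assume E: "E \<subseteq> S" "E \<noteq> {}"
      then obtain i where "i \<in> E" by auto
      moreover have "(\<Sum>i\<in>E. mu i) > 0" using E mu fin
        by (intro sum_pos) (auto intro: finite_subset)
      ultimately show "\<exists>i\<in>E. g i \<le> weak_norm mu S p g * (\<Sum>i\<in>E. mu i) powr (- inv_exp p)"
        using le E by (auto simp: inv_exp_def True)
    qed
  next
    case False
    define r where "r = real_of_ereal p"
    have r: "r > 0" using pp False r_def by auto
    have ie: "inv_exp p = 1 / r" using False by (simp add: inv_exp_def r_def)
    have wn: "weak_norm mu S p g = (SUP s\<in>{0<..}. s powr (1 / r) * rearr mu S g s)"
      using False by (simp add: weak_norm_def r_def)
    have up: "s powr (1 / r) * rearr mu S g s \<le> weak_norm mu S p g" if "s > 0" for s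
      unfolding wn using that by (intro cSUP_upper weak_bdd[OF fin(1) mu r]) auto
    have nn: "weak_norm mu S p g \<ge> 0"
      using up[of 1] rearr_nonneg[OF fin(1), of 1 mu g] by simp
    show ?thesis
    proof (intro conjI impI nn)
      assume E: "E \<subseteq> S" "E \<noteq> {}"
      have finE: "finite E" using E fin finite_subset by blast
      obtain i where i: "i \<in> E" "g i = Min (g ` E)"
        using finE E by (metis (mono_tags, lifting) Min_in finite_imageI image_iff image_is_empty)
      have imin: "\<forall>k\<in>E. g i \<le> g k" using i finE by auto
      define mE where "mE = (\<Sum>i\<in>E. mu i)"
      have mE: "mE > 0" using E mu finE unfolding mE_def by (intro sum_pos) auto
      show "\<exists>i\<in>E. g i \<le> weak_norm mu S p g * (\<Sum>i\<in>E. mu i) powr (- inv_exp p)"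
      proof (cases "g i = 0")
        case True
        then show ?thesis using i nn by (intro bexI[of _ i]) auto
      next
        case False
        hence v: "g i > 0" using g i E by force
        define W where "W = weak_norm mu S p g"
        have "mE \<le> (W / g i) powr r"
        proof (rule dense_le_bounded[of 0])
          show "0 < mE" by fact
        next
          fix s assume s: "0 < s" "s < mE"
          have "g i \<le> rearr mu S g s"
          proof (rule rearr_ge[OF fin(1)])
            show "0 \<le> s" using s by simp
          next
            fix lam assume lam: "lam > 0" "(\<Sum>i\<in>{i\<in>S. g i > lam}. mu i) \<le> s"
            show "g i \<le> lam"
            proof (rule ccontr)
              assume "\<not> g i \<le> lam"
              hence "E \<subseteq> {i\<in>S. g i > lam}" using imin E by force
              hence "mE \<le> (\<Sum>i\<in>{i\<in>S. g i > lam}. mu i)"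
                unfolding mE_def using fin mu by (intro sum_mono2) auto
              then show False using lam s by simp
            qed
          qed
          hence "s powr (1/r) * g i \<le> W"
            using up[of s] s unfolding W_def
            by (meson mult_left_mono order_trans powr_ge_zero)
          hence "s powr (1/r) \<le> W / g i" using v by (simp add: field_simps)
          hence "(s powr (1/r)) powr r \<le> (W / g i) powr r"
            using r by (intro powr_mono2) auto
          then show "s \<le> (W / g i) powr r" using s r by (simp add: powr_powr)
        qed
        hence "mE powr (1/r) \<le> ((W / g i) powr r) powr (1/r)"
          using r mE by (intro powr_mono2) auto
        also have "\<dots> = W / g i" using r v nn unfolding W_def by (simp add: powr_powr)
        finally have "g i * mE powr (1/r) \<le> W" using v by (simp add: field_simps)
        hence "g i \<le> W * mE powr (- (1/r))"
          using mE by (simp add: powr_minus_divide field_simps)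
        then show ?thesis using i(1) unfolding W_def mE_def ie by blast
      qed
    qed
  qed
  show "weak_norm mu S p g \<ge> 0" using A by blast
  show "E \<subseteq> S \<Longrightarrow> E \<noteq> {} \<Longrightarrow> \<exists>i\<in>E. g i \<le> weak_norm mu S p g * (\<Sum>i\<in>E. mu i) powr (- inv_exp p)"
    using A by blast
qed



lemma decomp:
  fixes w :: "nat \<Rightarrow> nat \<Rightarrow> real" and M N :: "nat set"
  shows "finite M \<Longrightarrow> finite N \<Longrightarrow> \<forall>i\<in>M. mu i > 0 \<Longrightarrow> \<forall>j\<in>N. nu j > 0
    \<Longrightarrow> X \<ge> 0 \<Longrightarrow> Y \<ge> 0 \<Longrightarrow> \<beta> \<le> 1
    \<Longrightarrow> (\<And>E F. E \<subseteq> M \<Longrightarrow> F \<subseteq> N \<Longrightarrow> E \<noteq> {} \<Longrightarrow> F \<noteq> {} \<Longrightarrow>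
          (\<Sum>i\<in>E. \<Sum>j\<in>F. w i j) \<le> max (X * (\<Sum>i\<in>E. mu i) powr \<beta>) (Y * (\<Sum>j\<in>F. nu j) powr \<beta>))
    \<Longrightarrow> \<exists>A \<subseteq> M \<times> N.
         (\<forall>E. E \<subseteq> M \<longrightarrow> E \<noteq> {} \<longrightarrow>
            (\<exists>i\<in>E. (\<Sum>j\<in>N. if (i,j)\<in>A then w i j else 0) \<le> X * mu i * (\<Sum>i\<in>E. mu i) powr (\<beta>-1)))
       \<and> (\<forall>F. F \<subseteq> N \<longrightarrow> F \<noteq> {} \<longrightarrow>
            (\<exists>j\<in>F. (\<Sum>i\<in>M. if (i,j)\<in>A then 0 else w i j) \<le> Y * nu j * (\<Sum>j\<in>F. nu j) powr (\<beta>-1)))"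
proof (induction "card M + card N" arbitrary: M N rule: less_induct)
  case less
  note finM = less.prems(1) and finN = less.prems(2) and mu = less.prems(3) and nu = less.prems(4)
    and X = less.prems(5) and Y = less.prems(6) and b1 = less.prems(7) and H = less.prems(8)
  have muE: "(\<Sum>i\<in>E. mu i) > 0" if "E \<subseteq> M" "E \<noteq> {}" for E
    using that mu finM by (intro sum_pos) (auto intro: finite_subset)
  have nuF: "(\<Sum>j\<in>F. nu j) > 0" if "F \<subseteq> N" "F \<noteq> {}" for F
    using that nu finN by (intro sum_pos) (auto intro: finite_subset)
  have mono_mu: "X * mu i * (\<Sum>i\<in>M. mu i) powr (\<beta>-1) \<le> X * mu i * (\<Sum>i\<in>E. mu i) powr (\<beta>-1)"
    if "E \<subseteq> M" "E \<noteq> {}" "i \<in> M" for E i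
  proof -
    have "(\<Sum>i\<in>E. mu i) \<le> (\<Sum>i\<in>M. mu i)"
      using that mu finM by (intro sum_mono2) auto
    hence "(\<Sum>i\<in>M. mu i) powr (\<beta>-1) \<le> (\<Sum>i\<in>E. mu i) powr (\<beta>-1)"
      using muE[OF that(1,2)] b1 by (intro powr_mono2') auto
    then show ?thesis using X mu that by (intro mult_left_mono) auto
  qed
  have mono_nu: "Y * nu j * (\<Sum>j\<in>N. nu j) powr (\<beta>-1) \<le> Y * nu j * (\<Sum>j\<in>F. nu j) powr (\<beta>-1)"
    if "F \<subseteq> N" "F \<noteq> {}" "j \<in> N" for F j
  proof -
    have "(\<Sum>j\<in>F. nu j) \<le> (\<Sum>j\<in>N. nu j)"
      using that nu finN by (intro sum_mono2) auto
    hence "(\<Sum>j\<in>N. nu j) powr (\<beta>-1) \<le> (\<Sum>j\<in>F. nu j) powr (\<beta>-1)"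
      using nuF[OF that(1,2)] b1 by (intro powr_mono2') auto
    then show ?thesis using Y nu that by (intro mult_left_mono) auto
  qed
  show ?case
  proof (cases "M = {} \<or> N = {}")
    case True
    show ?thesis
    proof (intro exI[of _ "{}"] conjI allI impI)
      fix E assume E: "E \<subseteq> M" "E \<noteq> {}"
      then obtain i where i: "i \<in> E" by auto
      have "0 \<le> X * mu i * (\<Sum>i\<in>E. mu i) powr (\<beta>-1)"
        using X mu E i by (intro mult_nonneg_nonneg) (auto simp: less_imp_le subset_iff)
      then show "\<exists>i\<in>E. (\<Sum>j\<in>N. if (i,j)\<in>{} then w i j else 0) \<le> X * mu i * (\<Sum>i\<in>E. mu i) powr (\<beta>-1)"
        using i by (intro bexI[of _ i]) auto
    next
      fix F assume F: "F \<subseteq> N" "F \<noteq> {}"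
      then obtain j where j: "j \<in> F" by auto
      have "0 \<le> Y * nu j * (\<Sum>j\<in>F. nu j) powr (\<beta>-1)"
        using Y nu F j by (intro mult_nonneg_nonneg) (auto simp: less_imp_le subset_iff)
      moreover note j
      moreover have "M = {}" using True F by auto
      ultimately show "\<exists>j\<in>F. (\<Sum>i\<in>M. if (i,j)\<in>{} then 0 else w i j) \<le> Y * nu j * (\<Sum>j\<in>F. nu j) powr (\<beta>-1)"
        using Y nu F by (intro bexI[of _ j]) auto
    qed auto
  next
    case False
    hence Mne: "M \<noteq> {}" and Nne: "N \<noteq> {}" by auto
    have "(\<exists>i\<in>M. (\<Sum>j\<in>N. w i j) \<le> X * mu i * (\<Sum>i\<in>M. mu i) powr (\<beta>-1))
        \<or> (\<exists>j\<in>N. (\<Sum>i\<in>M. w i j) \<le> Y * nu j * (\<Sum>j\<in>N. nu j) powr (\<beta>-1))"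
    proof (rule ccontr)
      assume "\<not> ?thesis"
      hence r: "\<forall>i\<in>M. X * mu i * (\<Sum>i\<in>M. mu i) powr (\<beta>-1) < (\<Sum>j\<in>N. w i j)"
        and c: "\<forall>j\<in>N. Y * nu j * (\<Sum>j\<in>N. nu j) powr (\<beta>-1) < (\<Sum>i\<in>M. w i j)"
        by auto
      have "(\<Sum>i\<in>M. X * mu i * (\<Sum>i\<in>M. mu i) powr (\<beta>-1)) < (\<Sum>i\<in>M. \<Sum>j\<in>N. w i j)"
        using r finM Mne by (intro sum_strict_mono) auto
      also have "(\<Sum>i\<in>M. X * mu i * (\<Sum>i\<in>M. mu i) powr (\<beta>-1)) = X * ((\<Sum>i\<in>M. mu i) * (\<Sum>i\<in>M. mu i) powr (\<beta>-1))"
        by (simp add: sum_distrib_left sum_distrib_right mult.assoc)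
      also have "(\<Sum>i\<in>M. mu i) * (\<Sum>i\<in>M. mu i) powr (\<beta>-1) = (\<Sum>i\<in>M. mu i) powr \<beta>"
        using muE[of M] Mne by (simp add: powr_mult_base)
      finally have 1: "X * (\<Sum>i\<in>M. mu i) powr \<beta> < (\<Sum>i\<in>M. \<Sum>j\<in>N. w i j)" .
      have "(\<Sum>j\<in>N. Y * nu j * (\<Sum>j\<in>N. nu j) powr (\<beta>-1)) < (\<Sum>j\<in>N. \<Sum>i\<in>M. w i j)"
        using c finN Nne by (intro sum_strict_mono) auto
      also have "(\<Sum>j\<in>N. Y * nu j * (\<Sum>j\<in>N. nu j) powr (\<beta>-1)) = Y * ((\<Sum>j\<in>N. nu j) * (\<Sum>j\<in>N. nu j) powr (\<beta>-1))"
        by (simp add: sum_distrib_left sum_distrib_right mult.assoc)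
      also have "(\<Sum>j\<in>N. nu j) * (\<Sum>j\<in>N. nu j) powr (\<beta>-1) = (\<Sum>j\<in>N. nu j) powr \<beta>"
        using nuF[of N] Nne by (simp add: powr_mult_base)
      also have "(\<Sum>j\<in>N. \<Sum>i\<in>M. w i j) = (\<Sum>i\<in>M. \<Sum>j\<in>N. w i j)" by (rule sum.swap)
      finally have 2: "Y * (\<Sum>j\<in>N. nu j) powr \<beta> < (\<Sum>i\<in>M. \<Sum>j\<in>N. w i j)" .
      have "(\<Sum>i\<in>M. \<Sum>j\<in>N. w i j) \<le> max (X * (\<Sum>i\<in>M. mu i) powr \<beta>) (Y * (\<Sum>j\<in>N. nu j) powr \<beta>)"
        using H[of M N] Mne Nne by auto
      then show False using 1 2 by linarith
    qed
    then show ?thesis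
    proof
      assume "\<exists>i\<in>M. (\<Sum>j\<in>N. w i j) \<le> X * mu i * (\<Sum>i\<in>M. mu i) powr (\<beta>-1)"
      then obtain i0 where i0: "i0 \<in> M" and i0s: "(\<Sum>j\<in>N. w i0 j) \<le> X * mu i0 * (\<Sum>i\<in>M. mu i) powr (\<beta>-1)"
        by blast
      define M' where "M' = M - {i0}"
      have lt: "card M' + card N < card M + card N"
        unfolding M'_def using i0 finM card_Diff1_less[OF finM i0] by simp
      obtain A' where A': "A' \<subseteq> M' \<times> N"
        and rA': "\<forall>E. E \<subseteq> M' \<longrightarrow> E \<noteq> {} \<longrightarrow>
            (\<exists>i\<in>E. (\<Sum>j\<in>N. if (i,j)\<in>A' then w i j else 0) \<le> X * mu i * (\<Sum>i\<in>E. mu i) powr (\<beta>-1))"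
        and cA': "\<forall>F. F \<subseteq> N \<longrightarrow> F \<noteq> {} \<longrightarrow>
            (\<exists>j\<in>F. (\<Sum>i\<in>M'. if (i,j)\<in>A' then 0 else w i j) \<le> Y * nu j * (\<Sum>j\<in>F. nu j) powr (\<beta>-1))"
      proof -
        have H': "(\<Sum>i\<in>E. \<Sum>j\<in>F. w i j) \<le> max (X * (\<Sum>i\<in>E. mu i) powr \<beta>) (Y * (\<Sum>j\<in>F. nu j) powr \<beta>)"
          if "E \<subseteq> M'" "F \<subseteq> N" "E \<noteq> {}" "F \<noteq> {}" for E F
          using that by (intro H) (auto simp: M'_def)
        have "finite M'" "\<forall>i\<in>M'. mu i > 0" using finM mu by (auto simp: M'_def)
        from less.hyps[of M' N, OF lt this(1) finN this(2) nu X Y b1 H']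
        show ?thesis using that by blast
      qed
      define A where "A = A' \<union> {i0} \<times> N"
      have memA: "(i,j) \<in> A \<longleftrightarrow> (i,j) \<in> A'" if "i \<noteq> i0" for i j
        using that by (auto simp: A_def)
      have memA0: "(i0,j) \<in> A" if "j \<in> N" for j using that by (auto simp: A_def)
      have notA'0: "(i0,j) \<notin> A'" for j using A' by (auto simp: M'_def)
      show ?thesis
      proof (intro exI[of _ A] conjI allI impI)
        show "A \<subseteq> M \<times> N" using A' i0 by (auto simp: A_def M'_def)
      next
        fix E assume E: "E \<subseteq> M" "E \<noteq> {}"
        show "\<exists>i\<in>E. (\<Sum>j\<in>N. if (i,j)\<in>A then w i j else 0) \<le> X * mu i * (\<Sum>i\<in>E. mu i) powr (\<beta>-1)"
        proof (cases "i0 \<in> E")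
          case True
          have "(\<Sum>j\<in>N. if (i0,j)\<in>A then w i0 j else 0) = (\<Sum>j\<in>N. w i0 j)"
            using memA0 by (intro sum.cong) auto
          also have "\<dots> \<le> X * mu i0 * (\<Sum>i\<in>E. mu i) powr (\<beta>-1)"
            using i0s mono_mu[OF E i0] by linarith
          finally show ?thesis using True by blast
        next
          case False
          hence "E \<subseteq> M'" using E by (auto simp: M'_def)
          then obtain i where i: "i \<in> E"
            and le: "(\<Sum>j\<in>N. if (i,j)\<in>A' then w i j else 0) \<le> X * mu i * (\<Sum>i\<in>E. mu i) powr (\<beta>-1)"
            using rA' E by blast
          have "i \<noteq> i0" using i False by auto
          hence "(\<Sum>j\<in>N. if (i,j)\<in>A then w i j else 0) = (\<Sum>j\<in>N. if (i,j)\<in>A' then w i j else 0)"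
            using memA by (intro sum.cong) auto
          with le have "(\<Sum>j\<in>N. if (i,j)\<in>A then w i j else 0) \<le> X * mu i * (\<Sum>i\<in>E. mu i) powr (\<beta>-1)"
            by simp
          then show ?thesis using i by blast
        qed
      next
        fix F assume F: "F \<subseteq> N" "F \<noteq> {}"
        then obtain j where j: "j \<in> F"
          and le: "(\<Sum>i\<in>M'. if (i,j)\<in>A' then 0 else w i j) \<le> Y * nu j * (\<Sum>j\<in>F. nu j) powr (\<beta>-1)"
          using cA' by blast
        have jN: "j \<in> N" using j F by auto
        have "(\<Sum>i\<in>M. if (i,j)\<in>A then 0 else w i j) = (if (i0,j)\<in>A then 0 else w i0 j) + (\<Sum>i\<in>M'. if (i,j)\<in>A then 0 else w i j)"
          unfolding M'_def using finM i0 by (rule sum.remove)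
        also have "\<dots> = (\<Sum>i\<in>M'. if (i,j)\<in>A' then 0 else w i j)"
          using memA0[OF jN] memA by (auto simp: M'_def intro!: sum.cong)
        finally have "(\<Sum>i\<in>M. if (i,j)\<in>A then 0 else w i j) \<le> Y * nu j * (\<Sum>j\<in>F. nu j) powr (\<beta>-1)"
          using le by simp
        then show "\<exists>j\<in>F. (\<Sum>i\<in>M. if (i,j)\<in>A then 0 else w i j) \<le> Y * nu j * (\<Sum>j\<in>F. nu j) powr (\<beta>-1)"
          using j by blast
      qed
    next
      assume "\<exists>j\<in>N. (\<Sum>i\<in>M. w i j) \<le> Y * nu j * (\<Sum>j\<in>N. nu j) powr (\<beta>-1)"
      then obtain j0 where j0: "j0 \<in> N" and j0s: "(\<Sum>i\<in>M. w i j0) \<le> Y * nu j0 * (\<Sum>j\<in>N. nu j) powr (\<beta>-1)"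
        by blast
      define N' where "N' = N - {j0}"
      have lt: "card M + card N' < card M + card N"
        unfolding N'_def using j0 finN card_Diff1_less[OF finN j0] by simp
      obtain A' where A': "A' \<subseteq> M \<times> N'"
        and rA': "\<forall>E. E \<subseteq> M \<longrightarrow> E \<noteq> {} \<longrightarrow>
            (\<exists>i\<in>E. (\<Sum>j\<in>N'. if (i,j)\<in>A' then w i j else 0) \<le> X * mu i * (\<Sum>i\<in>E. mu i) powr (\<beta>-1))"
        and cA': "\<forall>F. F \<subseteq> N' \<longrightarrow> F \<noteq> {} \<longrightarrow>
            (\<exists>j\<in>F. (\<Sum>i\<in>M. if (i,j)\<in>A' then 0 else w i j) \<le> Y * nu j * (\<Sum>j\<in>F. nu j) powr (\<beta>-1))"
      proof -
        have H': "(\<Sum>i\<in>E. \<Sum>j\<in>F. w i j) \<le> max (X * (\<Sum>i\<in>E. mu i) powr \<beta>) (Y * (\<Sum>j\<in>F. nu j) powr \<beta>)"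
          if "E \<subseteq> M" "F \<subseteq> N'" "E \<noteq> {}" "F \<noteq> {}" for E F
          using that by (intro H) (auto simp: N'_def)
        have "finite N'" "\<forall>j\<in>N'. nu j > 0" using finN nu by (auto simp: N'_def)
        from less.hyps[of M N', OF lt finM this(1) mu this(2) X Y b1 H']
        show ?thesis using that by blast
      qed
      have notA'0: "(i,j0) \<notin> A'" for i using A' by (auto simp: N'_def)
      show ?thesis
      proof (intro exI[of _ A'] conjI allI impI)
        show "A' \<subseteq> M \<times> N" using A' by (auto simp: N'_def)
      next
        fix E assume E: "E \<subseteq> M" "E \<noteq> {}"
        then obtain i where i: "i \<in> E"
          and le: "(\<Sum>j\<in>N'. if (i,j)\<in>A' then w i j else 0) \<le> X * mu i * (\<Sum>i\<in>E. mu i) powr (\<beta>-1)"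
          using rA' by blast
        have "(\<Sum>j\<in>N. if (i,j)\<in>A' then w i j else 0) = (if (i,j0)\<in>A' then w i j0 else 0) + (\<Sum>j\<in>N'. if (i,j)\<in>A' then w i j else 0)"
          unfolding N'_def using finN j0 by (rule sum.remove)
        also have "\<dots> = (\<Sum>j\<in>N'. if (i,j)\<in>A' then w i j else 0)"
          using notA'0 by simp
        finally have "(\<Sum>j\<in>N. if (i,j)\<in>A' then w i j else 0) \<le> X * mu i * (\<Sum>i\<in>E. mu i) powr (\<beta>-1)"
          using le by simp
        then show "\<exists>i\<in>E. (\<Sum>j\<in>N. if (i,j)\<in>A' then w i j else 0) \<le> X * mu i * (\<Sum>i\<in>E. mu i) powr (\<beta>-1)"
          using i by blast
      next
        fix F assume F: "F \<subseteq> N" "F \<noteq> {}"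
        show "\<exists>j\<in>F. (\<Sum>i\<in>M. if (i,j)\<in>A' then 0 else w i j) \<le> Y * nu j * (\<Sum>j\<in>F. nu j) powr (\<beta>-1)"
        proof (cases "j0 \<in> F")
          case True
          have "(\<Sum>i\<in>M. if (i,j0)\<in>A' then 0 else w i j0) = (\<Sum>i\<in>M. w i j0)"
            using notA'0 by simp
          also have "\<dots> \<le> Y * nu j0 * (\<Sum>j\<in>F. nu j) powr (\<beta>-1)"
            using j0s mono_nu[OF F j0] by linarith
          finally show ?thesis using True by blast
        next
          case False
          hence "F \<subseteq> N'" using F by (auto simp: N'_def)
          then show ?thesis using cA' F by blast
        qed
      qed
    qed
  qed
qed



lemma concave_step:
  fixes x y b :: real
  assumes "0 \<le> y" "y \<le> x" "0 < x" "0 < b" "b \<le> 1"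
  shows "b * (x - y) * x powr (b - 1) \<le> x powr b - y powr b"
proof (cases "y = 0")
  case True
  have "x * x powr (b - 1) = x powr b" using assms by (simp add: powr_mult_base)
  then show ?thesis using True assms
    by (simp add: mult.assoc)
next
  case False
  hence y: "y > 0" using assms by simp
  have Y: "x powr (1 - b) * y powr b \<le> (1 - b) * x + b * y"
    using Youngs_inequality_0[of "1-b" b x y] assms y by simp
  have "x powr (b - 1) * (x powr (1 - b) * y powr b) \<le> x powr (b - 1) * ((1 - b) * x + b * y)"
    by (intro mult_left_mono Y) simp
  also have "x powr (b - 1) * (x powr (1 - b) * y powr b) = y powr b"
    using assms by (simp add: mult.assoc[symmetric] flip: powr_add)
  also have "x powr (b - 1) * ((1 - b) * x + b * y) = (1 - b) * (x * x powr (b - 1)) + b * y * x powr (b - 1)"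
    by (simp add: algebra_simps)
  also have "x * x powr (b - 1) = x powr b" using assms by (simp add: powr_mult_base)
  finally have "y powr b \<le> (1 - b) * x powr b + b * y * x powr (b - 1)" .
  moreover have "b * (x - y) * x powr (b - 1) = b * (x * x powr (b - 1)) - b * y * x powr (b - 1)"
    by (simp add: algebra_simps)
  ultimately show ?thesis using \<open>x * x powr (b - 1) = x powr b\<close> by (simp add: algebra_simps)
qed

lemma weak_sum:
  fixes S :: "nat set" and mu g :: "nat \<Rightarrow> real"
  assumes fin: "finite S" and mu: "\<forall>i\<in>S. mu i > 0" and g: "\<forall>i\<in>S. g i \<ge> 0" and W: "W \<ge> 0"
    and b: "0 < b" "b \<le> 1" and q: "q > 0" and bq: "b - 1 = - (q * th)"
    and H: "\<And>E. E \<subseteq> S \<Longrightarrow> E \<noteq> {} \<Longrightarrow> \<exists>i\<in>E. g i \<le> W * (\<Sum>i\<in>E. mu i) powr (- th)"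
  shows "E \<subseteq> S \<Longrightarrow> b * (\<Sum>i\<in>E. mu i * g i powr q) \<le> W powr q * (\<Sum>i\<in>E. mu i) powr b"
proof (induction "card E" arbitrary: E rule: less_induct)
  case less
  have finE: "finite E" using less.prems fin finite_subset by blast
  show ?case
  proof (cases "E = {}")
    case True then show ?thesis by simp
  next
    case False
    obtain i0 where i0: "i0 \<in> E" and gi0: "g i0 \<le> W * (\<Sum>i\<in>E. mu i) powr (- th)"
      using H[OF less.prems False] by blast
    define E' where "E' = E - {i0}"
    define x where "x = (\<Sum>i\<in>E. mu i)"
    define y where "y = (\<Sum>i\<in>E'. mu i)"
    have x: "x > 0" unfolding x_def using finE False less.prems mu by (intro sum_pos) auto
    have y: "y \<ge> 0" unfolding y_def E'_def using less.prems mu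
      by (intro sum_nonneg) (auto simp: less_imp_le subset_iff)
    have xy: "x = mu i0 + y" unfolding x_def y_def E'_def using finE i0 by (rule sum.remove)
    have lt: "card E' < card E" unfolding E'_def using card_Diff1_less[OF finE i0] by simp
    have IH: "b * (\<Sum>i\<in>E'. mu i * g i powr q) \<le> W powr q * y powr b"
      using less.hyps[OF lt] less.prems unfolding y_def E'_def by auto
    have "g i0 powr q \<le> (W * x powr (- th)) powr q"
      using gi0 g i0 less.prems q unfolding x_def by (intro powr_mono2) auto
    also have "\<dots> = W powr q * x powr (b - 1)"
      using W x by (simp add: powr_mult powr_powr bq mult.commute)
    finally have g0: "g i0 powr q \<le> W powr q * x powr (b - 1)" .
    have "b * (\<Sum>i\<in>E. mu i * g i powr q) = b * (mu i0 * g i0 powr q) + b * (\<Sum>i\<in>E'. mu i * g i powr q)"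
      unfolding E'_def using finE i0 by (simp add: sum.remove distrib_left)
    also have "\<dots> \<le> b * (mu i0 * (W powr q * x powr (b - 1))) + W powr q * y powr b"
      using g0 IH mu i0 less.prems b
      by (intro add_mono mult_left_mono) (auto simp: less_imp_le subset_iff)
    also have "\<dots> = W powr q * (b * (x - y) * x powr (b - 1) + y powr b)"
      using xy by (simp add: algebra_simps)
    also have "\<dots> \<le> W powr q * x powr b"
    proof (intro mult_left_mono)
      have m0: "mu i0 > 0" using mu i0 less.prems by auto
      have "b * (x - y) * x powr (b - 1) \<le> x powr b - y powr b"
        using y x b xy m0 by (intro concave_step) auto
      then show "b * (x - y) * x powr (b - 1) + y powr b \<le> x powr b" by linarith
    qed simp
    finally show ?thesis unfolding x_def .
  qed
qed

lemma convex2: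
  fixes a b th q :: real
  assumes "0 \<le> a" "0 \<le> b" "0 \<le> th" "th \<le> 1" "1 \<le> q"
  shows "((1 - th) * a + th * b) powr q \<le> (1 - th) * a powr q + th * b powr q"
proof -
  have pw: "z powr q \<le> z" if "0 \<le> z" "z \<le> 1" for z :: real
  proof (cases "z = 0")
    case False then show ?thesis using that assms powr_le_one_le by auto
  qed simp
  show ?thesis
  proof (cases "a > 0 \<and> b > 0")
    case True
    show ?thesis
      using convex_onD[OF powr_convex[OF assms(5)], of th a b] True assms by simp
  next
    case False
    hence "a = 0 \<or> b = 0" using assms by auto
    then show ?thesis
    proof
      assume a0: "a = 0"
      have "(th * b) powr q = th powr q * b powr q" using assms by (simp add: powr_mult)
      also have "\<dots> \<le> th * b powr q" using pw[of th] assms by (intro mult_right_mono) auto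
      finally show ?thesis using a0 assms by simp
    next
      assume b0: "b = 0"
      have "((1 - th) * a) powr q = (1 - th) powr q * a powr q" using assms by (simp add: powr_mult)
      also have "\<dots> \<le> (1 - th) * a powr q" using pw[of "1 - th"] assms by (intro mult_right_mono) auto
      finally show ?thesis using b0 assms by simp
    qed
  qed
qed

lemma minkowski:
  fixes u v c :: "'a \<Rightarrow> real"
  assumes fin: "finite I" and nn: "\<forall>k\<in>I. u k \<ge> 0 \<and> v k \<ge> 0 \<and> c k \<ge> 0" and q: "q \<ge> 1"
  shows "(\<Sum>k\<in>I. (u k + v k) powr q * c k) powr (1/q)
     \<le> (\<Sum>k\<in>I. u k powr q * c k) powr (1/q) + (\<Sum>k\<in>I. v k powr q * c k) powr (1/q)"
proof (rule field_le_epsilon)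
  fix e :: real assume e: "e > 0"
  define U where "U = (\<Sum>k\<in>I. u k powr q * c k) powr (1/q)"
  define V where "V = (\<Sum>k\<in>I. v k powr q * c k) powr (1/q)"
  define X where "X = U + e/2"
  define Y where "Y = V + e/2"
  have X: "X > 0" and Y: "Y > 0" using e by (auto simp: X_def Y_def U_def V_def add_nonneg_pos)
  have su: "(\<Sum>k\<in>I. u k powr q * c k) \<le> X powr q"
  proof -
    have s0: "(\<Sum>k\<in>I. u k powr q * c k) \<ge> 0" using nn by (intro sum_nonneg) auto
    have "(\<Sum>k\<in>I. u k powr q * c k) = U powr q" unfolding U_def using s0 q by (simp add: powr_powr)
    also have "\<dots> \<le> X powr q" using q e by (intro powr_mono2) (auto simp: X_def U_def)
    finally show ?thesis .
  qed
  have sv: "(\<Sum>k\<in>I. v k powr q * c k) \<le> Y powr q"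
  proof -
    have s0: "(\<Sum>k\<in>I. v k powr q * c k) \<ge> 0" using nn by (intro sum_nonneg) auto
    have "(\<Sum>k\<in>I. v k powr q * c k) = V powr q" unfolding V_def using s0 q by (simp add: powr_powr)
    also have "\<dots> \<le> Y powr q" using q e by (intro powr_mono2) (auto simp: Y_def V_def)
    finally show ?thesis .
  qed
  define th where "th = Y / (X + Y)"
  have th: "0 \<le> th" "th \<le> 1" using X Y by (auto simp: th_def)
  have pt: "(u k + v k) powr q * c k \<le> (X + Y) powr q * ((1 - th) * (u k powr q * c k) / X powr q + th * (v k powr q * c k) / Y powr q)"
    if k: "k \<in> I" for k
  proof -
    have t1: "1 - th = X / (X + Y)" using X Y by (simp add: th_def field_simps)
    have "(1 - th) * (u k / X) + th * (v k / Y) = u k / (X + Y) + v k / (X + Y)"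
      unfolding t1 using X Y by (simp add: th_def)
    also have "\<dots> = (u k + v k) / (X + Y)" by (simp add: add_divide_distrib)
    finally have eq: "u k + v k = (X + Y) * ((1 - th) * (u k / X) + th * (v k / Y))"
      using X Y by simp
    have "(u k + v k) powr q = (X + Y) powr q * ((1 - th) * (u k / X) + th * (v k / Y)) powr q"
      unfolding eq using X Y th nn k by (subst powr_mult) auto
    also have "\<dots> \<le> (X + Y) powr q * ((1 - th) * (u k / X) powr q + th * (v k / Y) powr q)"
      using convex2[of "u k / X" "v k / Y" th q] X Y th nn k q by (intro mult_left_mono) auto
    also have "\<dots> = (X + Y) powr q * ((1 - th) * u k powr q / X powr q + th * v k powr q / Y powr q)"
      by (simp add: powr_divide)
    finally have "(u k + v k) powr q * c k \<le> (X + Y) powr q * ((1 - th) * u k powr q / X powr q + th * v k powr q / Y powr q) * c k"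
      using nn k by (intro mult_right_mono) auto
    then show ?thesis by (simp add: algebra_simps)
  qed
  have "(\<Sum>k\<in>I. (u k + v k) powr q * c k) \<le> (\<Sum>k\<in>I. (X + Y) powr q * ((1 - th) * (u k powr q * c k) / X powr q + th * (v k powr q * c k) / Y powr q))"
    using pt by (intro sum_mono) auto
  also have "\<dots> = (X + Y) powr q * ((1 - th) * (\<Sum>k\<in>I. u k powr q * c k) / X powr q + th * (\<Sum>k\<in>I. v k powr q * c k) / Y powr q)"
    by (simp add: sum_distrib_left[symmetric] sum_divide_distrib[symmetric] sum.distrib)
  also have "\<dots> \<le> (X + Y) powr q * ((1 - th) * 1 + th * 1)"
  proof (intro mult_left_mono add_mono)
    have h1: "(\<Sum>k\<in>I. u k powr q * c k) / X powr q \<le> 1" using su X by simp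
    show "(1 - th) * (\<Sum>k\<in>I. u k powr q * c k) / X powr q \<le> (1 - th) * 1"
      using mult_left_mono[OF h1, of "1 - th"] th by simp
    have h2: "(\<Sum>k\<in>I. v k powr q * c k) / Y powr q \<le> 1" using sv Y by simp
    show "th * (\<Sum>k\<in>I. v k powr q * c k) / Y powr q \<le> th * 1"
      using mult_left_mono[OF h2, of th] th by simp
  qed simp
  finally have "(\<Sum>k\<in>I. (u k + v k) powr q * c k) \<le> (X + Y) powr q" by simp
  hence "(\<Sum>k\<in>I. (u k + v k) powr q * c k) powr (1/q) \<le> ((X + Y) powr q) powr (1/q)"
    using q nn by (intro powr_mono2) (auto intro!: sum_nonneg)
  also have "\<dots> = X + Y" using X Y q by (simp add: powr_powr)
  finally show "(\<Sum>k\<in>I. (u k + v k) powr q * c k) powr (1/q) \<le> U + V + e"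
    by (simp add: X_def Y_def)
qed



lemma sum_rect:
  fixes f :: "nat \<Rightarrow> nat \<Rightarrow> real"
  assumes "finite S1" "finite S2" "E \<subseteq> S1" "F \<subseteq> S2"
  shows "(\<Sum>i\<in>S1. \<Sum>j\<in>S2. if i \<in> E \<and> j \<in> F then f i j else 0) = (\<Sum>i\<in>E. \<Sum>j\<in>F. f i j)"
proof -
  have "(\<Sum>i\<in>S1. \<Sum>j\<in>S2. if i \<in> E \<and> j \<in> F then f i j else 0)
      = (\<Sum>i\<in>S1. if i \<in> E then (\<Sum>j\<in>S2. if j \<in> F then f i j else 0) else 0)"
    by (intro sum.cong) auto
  also have "\<dots> = (\<Sum>i\<in>S1. if i \<in> E then (\<Sum>j\<in>F. f i j) else 0)"
    using assms by (intro sum.cong) (auto simp: sum.inter_restrict[symmetric] Int_absorb1)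
  also have "\<dots> = (\<Sum>i\<in>E. \<Sum>j\<in>F. f i j)"
    using assms by (simp add: sum.inter_restrict[symmetric] Int_absorb1)
  finally show ?thesis .
qed

lemma max_powr:
  fixes x y r :: real
  assumes "0 \<le> x" "0 \<le> y" "0 \<le> r"
  shows "(max x y) powr r = max (x powr r) (y powr r)"
proof (cases "x \<le> y")
  case True
  then show ?thesis using assms powr_mono2[of r x y] by (simp add: max_def)
next
  case False
  then show ?thesis using assms powr_mono2[of r y x] by (simp add: max_def)
qed

lemma root_bound:
  fixes b S W X q :: real
  assumes "b > 0" "S \<ge> 0" "W \<ge> 0" "X > 0" "q > 0" "b * S \<le> W powr q * X powr b"
  shows "b powr (1/q) * S powr (1/q) \<le> W * X powr (b / q)"
proof -
  have "b powr (1/q) * S powr (1/q) = (b * S) powr (1/q)" using assms by (simp add: powr_mult)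
  also have "\<dots> \<le> (W powr q * X powr b) powr (1/q)" using assms by (intro powr_mono2) auto
  also have "\<dots> = W * X powr (b / q)" using assms by (simp add: powr_mult powr_powr)
  finally show ?thesis .
qed

lemma block_lower:
  fixes S1 S2 E F :: "nat set" and w1 w2 :: "nat \<Rightarrow> real" and h :: "nat \<Rightarrow> nat \<Rightarrow> real"
  assumes fin: "finite S1" "S1 \<noteq> {}" "finite S2" and w1: "\<forall>i\<in>S1. w1 i > 0" and w2: "\<forall>j\<in>S2. w2 j > 0"
    and h: "\<forall>i\<in>S1. \<forall>j\<in>S2. h i j \<ge> 0"
    and pp: "p = \<infinity> \<or> 0 < real_of_ereal p" and q: "q > 0" and b: "0 < b" "b \<le> 1"
    and bq: "b - 1 = - (q * inv_exp p)" and E: "E \<subseteq> S1"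
  shows "b * (\<Sum>i\<in>S1. \<Sum>j\<in>S2. (if i \<in> E \<and> j \<in> F then h i j else 0) * w1 i * w2 j)
     \<le> (weak_norm w1 S1 p (\<lambda>i. (\<Sum>j\<in>S2. h i j * w2 j) powr (1/q))) powr q * (\<Sum>i\<in>E. w1 i) powr b"
proof -
  define g where "g i = (\<Sum>j\<in>S2. h i j * w2 j) powr (1/q)" for i
  define W where "W = weak_norm w1 S1 p g"
  have g: "\<forall>i\<in>S1. g i \<ge> 0" by (simp add: g_def)
  have W: "W \<ge> 0" unfolding W_def using weak_norm_ge(1)[OF fin(1,2) w1 pp g] .
  have H: "\<exists>i\<in>E'. g i \<le> W * (\<Sum>i\<in>E'. w1 i) powr (- inv_exp p)" if "E' \<subseteq> S1" "E' \<noteq> {}" for E'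
    unfolding W_def using weak_norm_ge(2)[OF fin(1,2) w1 pp g that] .
  have ws: "b * (\<Sum>i\<in>E. w1 i * g i powr q) \<le> W powr q * (\<Sum>i\<in>E. w1 i) powr b"
    by (rule weak_sum[OF fin(1) w1 g W b q bq H E])
  have gq: "g i powr q = (\<Sum>j\<in>S2. h i j * w2 j)" if "i \<in> S1" for i
  proof -
    have "(\<Sum>j\<in>S2. h i j * w2 j) \<ge> 0" using h w2 that by (intro sum_nonneg) (auto simp: less_imp_le)
    then show ?thesis using q by (simp add: g_def powr_powr)
  qed
  have "(\<Sum>i\<in>S1. \<Sum>j\<in>S2. (if i \<in> E \<and> j \<in> F then h i j else 0) * w1 i * w2 j)
      \<le> (\<Sum>i\<in>S1. if i \<in> E then w1 i * g i powr q else 0)"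
  proof (intro sum_mono)
    fix i assume i: "i \<in> S1"
    show "(\<Sum>j\<in>S2. (if i \<in> E \<and> j \<in> F then h i j else 0) * w1 i * w2 j) \<le> (if i \<in> E then w1 i * g i powr q else 0)"
    proof (cases "i \<in> E")
      case True
      have "(\<Sum>j\<in>S2. (if i \<in> E \<and> j \<in> F then h i j else 0) * w1 i * w2 j) \<le> (\<Sum>j\<in>S2. w1 i * (h i j * w2 j))"
        using True h w1 w2 i by (intro sum_mono) (auto simp: less_imp_le)
      also have "\<dots> = w1 i * g i powr q" using gq[OF i] by (simp add: sum_distrib_left)
      finally show ?thesis using True by simp
    qed simp
  qed
  also have "\<dots> = (\<Sum>i\<in>E. w1 i * g i powr q)"
    using fin E by (simp add: sum.inter_restrict[symmetric] Int_absorb1)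
  finally have "b * (\<Sum>i\<in>S1. \<Sum>j\<in>S2. (if i \<in> E \<and> j \<in> F then h i j else 0) * w1 i * w2 j) \<le> b * (\<Sum>i\<in>E. w1 i * g i powr q)"
    using b by simp
  also note ws
  finally show ?thesis unfolding W_def g_def .
qed

lemma conv_upper:
  fixes S1 S2 :: "nat set" and w1 w2 :: "nat \<Rightarrow> real" and k :: "nat \<Rightarrow> nat \<Rightarrow> real"
  assumes fin: "finite S1" "S1 \<noteq> {}" "finite S2" and w1: "\<forall>i\<in>S1. w1 i > 0" and w2: "\<forall>j\<in>S2. w2 j \<ge> 0"
    and k: "\<forall>i\<in>S1. \<forall>j\<in>S2. k i j \<ge> 0"
    and pp: "p = \<infinity> \<or> 0 < real_of_ereal p" and q: "q > 0" and tau: "tau \<ge> 0"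
    and bq: "b - 1 = - (q * inv_exp p)"
    and cond: "\<forall>E. E \<subseteq> S1 \<longrightarrow> E \<noteq> {} \<longrightarrow>
       (\<exists>i\<in>E. w1 i * (\<Sum>j\<in>S2. k i j * w2 j) \<le> tau powr q * w1 i * (\<Sum>i\<in>E. w1 i) powr (b - 1))"
  shows "weak_norm w1 S1 p (\<lambda>i. (\<Sum>j\<in>S2. k i j * w2 j) powr (1/q)) \<le> tau"
proof (rule weak_norm_le[OF fin(1,2) w1 pp tau])
  fix E assume E: "E \<subseteq> S1" "E \<noteq> {}"
  then obtain i where i: "i \<in> E" and le: "w1 i * (\<Sum>j\<in>S2. k i j * w2 j) \<le> tau powr q * w1 i * (\<Sum>i\<in>E. w1 i) powr (b - 1)"
    using cond by blast
  have wi: "w1 i > 0" using w1 E i by auto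
  have x: "(\<Sum>i\<in>E. w1 i) > 0" using E w1 fin by (intro sum_pos) (auto intro: finite_subset)
  have le2: "(\<Sum>j\<in>S2. k i j * w2 j) \<le> tau powr q * (\<Sum>i\<in>E. w1 i) powr (b - 1)"
    using le wi by (simp add: mult.commute mult.left_commute)
  have s0: "(\<Sum>j\<in>S2. k i j * w2 j) \<ge> 0" using k w2 i E by (intro sum_nonneg) auto
  have "(\<Sum>j\<in>S2. k i j * w2 j) powr (1/q) \<le> (tau powr q * (\<Sum>i\<in>E. w1 i) powr (b - 1)) powr (1/q)"
    using le2 s0 q by (intro powr_mono2) auto
  also have "\<dots> = tau * (\<Sum>i\<in>E. w1 i) powr (- inv_exp p)"
    using tau q by (simp add: powr_mult powr_powr bq)
  finally show "\<exists>i\<in>E. (\<Sum>j\<in>S2. k i j * w2 j) powr (1/q) \<le> tau * (\<Sum>i\<in>E. w1 i) powr (- inv_exp p)"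
    using i by blast
qed

lemma lq_triangle:
  fixes x y z :: "nat \<Rightarrow> nat \<Rightarrow> real"
  assumes mu: "\<forall>i\<in>{1..m}. mu i > 0" and nu: "\<forall>j\<in>{1..n}. nu j > 0" and q: "q \<ge> 1"
    and le: "\<forall>i\<in>{1..m}. \<forall>j\<in>{1..n}. \<bar>x i j\<bar> \<le> \<bar>y i j\<bar> + \<bar>z i j\<bar>"
  shows "lq_norm m n mu nu q x \<le> lq_norm m n mu nu q y + lq_norm m n mu nu q z"
proof -
  define I where "I = {1..m} \<times> {1..n}"
  define c where "c k = mu (fst k) * nu (snd k)" for k
  define u where "u k = \<bar>y (fst k) (snd k)\<bar>" for k
  define v where "v k = \<bar>z (fst k) (snd k)\<bar>" for k
  have conv: "(\<Sum>i\<in>{1..m}. \<Sum>j\<in>{1..n}. \<bar>f i j\<bar> powr q * mu i * nu j) = (\<Sum>k\<in>I. \<bar>f (fst k) (snd k)\<bar> powr q * c k)" for f :: "nat \<Rightarrow> nat \<Rightarrow> real"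
    unfolding I_def c_def by (simp add: sum.cartesian_product case_prod_beta mult.assoc)
  have nn: "\<forall>k\<in>I. u k \<ge> 0 \<and> v k \<ge> 0 \<and> c k \<ge> 0"
    using mu nu by (auto simp: I_def u_def v_def c_def less_imp_le)
  have "(\<Sum>k\<in>I. \<bar>x (fst k) (snd k)\<bar> powr q * c k) \<le> (\<Sum>k\<in>I. (u k + v k) powr q * c k)"
    using le nn q by (intro sum_mono mult_right_mono powr_mono2) (auto simp: I_def u_def v_def)
  hence "(\<Sum>k\<in>I. \<bar>x (fst k) (snd k)\<bar> powr q * c k) powr (1/q) \<le> (\<Sum>k\<in>I. (u k + v k) powr q * c k) powr (1/q)"
    using q nn by (intro powr_mono2) (auto intro!: sum_nonneg)
  also have "\<dots> \<le> (\<Sum>k\<in>I. u k powr q * c k) powr (1/q) + (\<Sum>k\<in>I. v k powr q * c k) powr (1/q)"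
    by (rule minkowski) (use nn q in \<open>auto simp: I_def\<close>)
  finally show ?thesis unfolding lq_norm_def conv u_def v_def .
qed



theorem theorem2p5:
  fixes m n :: nat and mu nu :: "nat \<Rightarrow> real" and p :: ereal and q t :: real
    and a :: "nat \<Rightarrow> nat \<Rightarrow> real"
  assumes "m \<ge> 1" and "n \<ge> 1"
    and "\<forall>i\<in>{1..m}. mu i > 0" and "\<forall>j\<in>{1..n}. nu j > 0"
    and "t > 0" and "1 \<le> q" and "ereal q < p"
  shows "Cpq p q * triple_norm m n mu nu p q t a \<le> K_func m n mu nu p q t a
       \<and> K_func m n mu nu p q t a \<le> 2 * triple_norm m n mu nu p q t a
       \<and> (triple_norm m n mu nu p q t a \<le> 1 \<longrightarrow>
            (\<exists>A B. A \<union> B = {1..m} \<times> {1..n} \<and> A \<inter> B = {}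
               \<and> row_norm m n mu nu p q (mask A a) \<le> 1
               \<and> col_norm m n mu nu p q (mask B a) \<le> 1 / t))"
proof -
  note m1 = assms(1) and n1 = assms(2) and mu = assms(3) and nu = assms(4) and t = assms(5)
    and q1 = assms(6) and qp = assms(7)
  have q: "q > 0" using q1 by simp
  have Mfin: "finite {1..m}" "{1..m} \<noteq> {}" using m1 by auto
  have Nfin: "finite {1..n}" "{1..n} \<noteq> {}" using n1 by auto
  have pth: "(p = \<infinity> \<or> 0 < real_of_ereal p) \<and> inv_exp p \<ge> 0 \<and> q * inv_exp p < 1"
  proof (cases p)
    case (real r)
    then have r: "r > q" using qp by simp
    then have "q / r < 1" using q by simp
    then show ?thesis using real r q by (simp add: inv_exp_def)
  next
    case PInf then show ?thesis by (simp add: inv_exp_def)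
  next
    case MInf then show ?thesis using qp by simp
  qed
  hence pp: "p = \<infinity> \<or> 0 < real_of_ereal p" and th0: "inv_exp p \<ge> 0" and thq: "q * inv_exp p < 1"
    by auto
  define b where "b = 1 - q * inv_exp p"
  have b: "0 < b" "b \<le> 1" using th0 thq q by (auto simp: b_def)
  have bq: "b - 1 = - (q * inv_exp p)" by (simp add: b_def)
  have alpha: "1 / q - inv_exp p = b / q" using q by (simp add: b_def field_simps)
  have Cpq: "Cpq p q = b powr (1/q)" by (simp add: Cpq_def b_def)
  have Cpos: "Cpq p q > 0" using Cpq b by simp
  define Idx where "Idx = {(E, F). E \<subseteq> {1..m} \<and> E \<noteq> {} \<and> F \<subseteq> {1..n} \<and> F \<noteq> {}}"
  define D where "D EF = max ((\<Sum>i\<in>fst EF. mu i) powr (b/q)) ((\<Sum>j\<in>snd EF. nu j) powr (b/q) / t)" for EF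
  define trm where "trm EF = lq_norm m n mu nu q (mask (fst EF \<times> snd EF) a) / D EF" for EF
  define T where "T = triple_norm m n mu nu p q t a"
  have T: "T = (SUP EF\<in>Idx. trm EF)"
    by (simp add: T_def triple_norm_def alpha trm_def D_def Idx_def Let_def)
  have Idxfin: "finite Idx"
  proof -
    have "Idx \<subseteq> Pow {1..m} \<times> Pow {1..n}" by (auto simp: Idx_def)
    then show ?thesis by (rule finite_subset) auto
  qed
  have Idxne: "({1}, {1}) \<in> Idx" using m1 n1 by (auto simp: Idx_def)
  have muE: "(\<Sum>i\<in>E. mu i) > 0" if "E \<subseteq> {1..m}" "E \<noteq> {}" for E
    using that mu by (intro sum_pos) (auto intro: finite_subset)
  have nuF: "(\<Sum>j\<in>F. nu j) > 0" if "F \<subseteq> {1..n}" "F \<noteq> {}" for F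
    using that nu by (intro sum_pos) (auto intro: finite_subset)
  have Dpos: "D EF > 0" if "EF \<in> Idx" for EF
  proof -
    have "fst EF \<subseteq> {1..m}" "fst EF \<noteq> {}" using that by (auto simp: Idx_def)
    hence "(\<Sum>i\<in>fst EF. mu i) > 0" by (rule muE)
    hence "(\<Sum>i\<in>fst EF. mu i) powr (b/q) > 0" by simp
    then show ?thesis unfolding D_def by (rule less_le_trans) simp
  qed
  have trm_le: "trm EF \<le> T" if "EF \<in> Idx" for EF
    unfolding T using that Idxfin by (intro cSUP_upper bdd_above_finite) auto
  have trm_ge: "trm EF \<ge> 0" if "EF \<in> Idx" for EF
    using Dpos[OF that] by (simp add: trm_def lq_norm_def)
  have T0: "T \<ge> 0" using trm_le[OF Idxne] trm_ge[OF Idxne] by simp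

  have rn0: "row_norm m n mu nu p q x \<ge> 0" for x
    unfolding row_norm_def by (rule weak_norm_ge(1)[OF Mfin mu pp]) simp
  have cn0: "col_norm m n mu nu p q x \<ge> 0" for x
    unfolding col_norm_def by (rule weak_norm_ge(1)[OF Nfin nu pp]) simp
  define KS where "KS = {row_norm m n mu nu p q b' + t * col_norm m n mu nu p q c' | b' c'.
            \<forall>i\<in>{1..m}. \<forall>j\<in>{1..n}. a i j = b' i j + c' i j}"
  have K: "K_func m n mu nu p q t a = Inf KS" by (simp add: K_func_def KS_def)
  have K_le: "K_func m n mu nu p q t a \<le> row_norm m n mu nu p q b' + t * col_norm m n mu nu p q c'"
    if "\<forall>i\<in>{1..m}. \<forall>j\<in>{1..n}. a i j = b' i j + c' i j" for b' c'
    unfolding K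
  proof (rule cInf_lower)
    show "row_norm m n mu nu p q b' + t * col_norm m n mu nu p q c' \<in> KS"
      unfolding KS_def using that by blast
    show "bdd_below KS"
      by (rule bdd_belowI[where m=0]) (use rn0 cn0 t in \<open>auto simp: KS_def intro!: add_nonneg_nonneg\<close>)
  qed

  have decompT: "\<exists>A B. A \<union> B = {1..m} \<times> {1..n} \<and> A \<inter> B = {}
               \<and> row_norm m n mu nu p q (mask A a) \<le> tau
               \<and> col_norm m n mu nu p q (mask B a) \<le> tau / t"
    if tau: "tau \<ge> 0" "T \<le> tau" for tau
  proof -
    define w where "w i j = \<bar>a i j\<bar> powr q * mu i * nu j" for i j
    have w0: "w i j \<ge> 0" if "i \<in> {1..m}" "j \<in> {1..n}" for i j
      using mu nu that unfolding w_def by (intro mult_nonneg_nonneg) (auto simp: less_imp_le)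
    have H: "(\<Sum>i\<in>E. \<Sum>j\<in>F. w i j) \<le> max (tau powr q * (\<Sum>i\<in>E. mu i) powr b) ((tau / t) powr q * (\<Sum>j\<in>F. nu j) powr b)"
      if EF: "E \<subseteq> {1..m}" "F \<subseteq> {1..n}" "E \<noteq> {}" "F \<noteq> {}" for E F
    proof -
      have I: "(E, F) \<in> Idx" using EF by (auto simp: Idx_def)
      have Dp: "D (E, F) > 0" using Dpos[OF I] .
      have "trm (E, F) \<le> tau" using trm_le[OF I] tau by simp
      hence lqle: "lq_norm m n mu nu q (mask (E \<times> F) a) \<le> tau * D (E, F)"
        using Dp by (simp add: trm_def divide_le_eq)
      have "(\<Sum>i\<in>{1..m}. \<Sum>j\<in>{1..n}. \<bar>mask (E \<times> F) a i j\<bar> powr q * mu i * nu j)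
          = (\<Sum>i\<in>{1..m}. \<Sum>j\<in>{1..n}. if i \<in> E \<and> j \<in> F then w i j else 0)"
        by (intro sum.cong) (auto simp: mask_def w_def)
      also have "\<dots> = (\<Sum>i\<in>E. \<Sum>j\<in>F. w i j)"
        using EF by (intro sum_rect) auto
      finally have lqeq: "lq_norm m n mu nu q (mask (E \<times> F) a) = (\<Sum>i\<in>E. \<Sum>j\<in>F. w i j) powr (1/q)"
        by (simp add: lq_norm_def)
      have S0: "(\<Sum>i\<in>E. \<Sum>j\<in>F. w i j) \<ge> 0"
        using EF w0 by (intro sum_nonneg) (auto simp: subset_iff)
      have "(\<Sum>i\<in>E. \<Sum>j\<in>F. w i j) = (lq_norm m n mu nu q (mask (E \<times> F) a)) powr q"
        using S0 q by (simp add: lqeq powr_powr)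
      also have "\<dots> \<le> (tau * D (E, F)) powr q"
        using lqle q by (intro powr_mono2) (auto simp: lq_norm_def)
      also have "\<dots> = tau powr q * max ((\<Sum>i\<in>E. mu i) powr b) ((\<Sum>j\<in>F. nu j) powr b / t powr q)"
        using tau t q by (simp add: D_def powr_mult max_powr powr_divide powr_powr)
      also have "\<dots> = max (tau powr q * (\<Sum>i\<in>E. mu i) powr b) ((tau / t) powr q * (\<Sum>j\<in>F. nu j) powr b)"
        by (simp add: max_mult_distrib_left powr_divide)
      finally show ?thesis .
    qed
    obtain A where A: "A \<subseteq> {1..m} \<times> {1..n}"
      and rA: "\<forall>E. E \<subseteq> {1..m} \<longrightarrow> E \<noteq> {} \<longrightarrow>
            (\<exists>i\<in>E. (\<Sum>j\<in>{1..n}. if (i,j)\<in>A then w i j else 0) \<le> tau powr q * mu i * (\<Sum>i\<in>E. mu i) powr (b-1))"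
      and cA: "\<forall>F. F \<subseteq> {1..n} \<longrightarrow> F \<noteq> {} \<longrightarrow>
            (\<exists>j\<in>F. (\<Sum>i\<in>{1..m}. if (i,j)\<in>A then 0 else w i j) \<le> (tau / t) powr q * nu j * (\<Sum>j\<in>F. nu j) powr (b-1))"
      using decomp[OF Mfin(1) Nfin(1) mu nu _ _ b(2) H] by auto
    define B where "B = {1..m} \<times> {1..n} - A"
    have row: "row_norm m n mu nu p q (mask A a) \<le> tau"
      unfolding row_norm_def
    proof (rule conv_upper[OF Mfin Nfin(1) mu _ _ pp q tau(1) bq])
      show "\<forall>j\<in>{1..n}. 0 \<le> nu j" using nu by (auto simp: less_imp_le)
      show "\<forall>i\<in>{1..m}. \<forall>j\<in>{1..n}. 0 \<le> \<bar>mask A a i j\<bar> powr q" by simp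
      show "\<forall>E. E \<subseteq> {1..m} \<longrightarrow> E \<noteq> {} \<longrightarrow> (\<exists>i\<in>E. mu i * (\<Sum>j\<in>{1..n}. \<bar>mask A a i j\<bar> powr q * nu j)
              \<le> tau powr q * mu i * (\<Sum>i\<in>E. mu i) powr (b - 1))"
      proof (intro allI impI)
        fix E assume E: "E \<subseteq> {1..m}" "E \<noteq> {}"
        then obtain i where i: "i \<in> E" and le: "(\<Sum>j\<in>{1..n}. if (i,j)\<in>A then w i j else 0) \<le> tau powr q * mu i * (\<Sum>i\<in>E. mu i) powr (b-1)"
          using rA by blast
        have "mu i * (\<Sum>j\<in>{1..n}. \<bar>mask A a i j\<bar> powr q * nu j) = (\<Sum>j\<in>{1..n}. if (i,j)\<in>A then w i j else 0)"
          unfolding sum_distrib_left by (intro sum.cong) (auto simp: mask_def w_def)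
        then show "\<exists>i\<in>E. mu i * (\<Sum>j\<in>{1..n}. \<bar>mask A a i j\<bar> powr q * nu j) \<le> tau powr q * mu i * (\<Sum>i\<in>E. mu i) powr (b - 1)"
          using i le by (metis)
      qed
    qed
    have col: "col_norm m n mu nu p q (mask B a) \<le> tau / t"
      unfolding col_norm_def
    proof (rule conv_upper[OF Nfin Mfin(1) nu _ _ pp q _ bq])
      show "0 \<le> tau / t" using tau t by simp
      show "\<forall>j\<in>{1..m}. 0 \<le> mu j" using mu by (auto simp: less_imp_le)
      show "\<forall>j\<in>{1..n}. \<forall>i\<in>{1..m}. 0 \<le> \<bar>mask B a i j\<bar> powr q" by simp
      show "\<forall>F. F \<subseteq> {1..n} \<longrightarrow> F \<noteq> {} \<longrightarrow> (\<exists>j\<in>F. nu j * (\<Sum>i\<in>{1..m}. \<bar>mask B a i j\<bar> powr q * mu i)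
              \<le> (tau / t) powr q * nu j * (\<Sum>j\<in>F. nu j) powr (b - 1))"
      proof (intro allI impI)
        fix F assume F: "F \<subseteq> {1..n}" "F \<noteq> {}"
        then obtain j where j: "j \<in> F" and le: "(\<Sum>i\<in>{1..m}. if (i,j)\<in>A then 0 else w i j) \<le> (tau / t) powr q * nu j * (\<Sum>j\<in>F. nu j) powr (b-1)"
          using cA by blast
        have jN: "j \<in> {1..n}" using j F by auto
        have "nu j * (\<Sum>i\<in>{1..m}. \<bar>mask B a i j\<bar> powr q * mu i) = (\<Sum>i\<in>{1..m}. if (i,j)\<in>A then 0 else w i j)"
          unfolding sum_distrib_left using jN by (intro sum.cong) (auto simp: mask_def w_def B_def)
        then show "\<exists>j\<in>F. nu j * (\<Sum>i\<in>{1..m}. \<bar>mask B a i j\<bar> powr q * mu i) \<le> (tau / t) powr q * nu j * (\<Sum>j\<in>F. nu j) powr (b - 1)"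
          using j le by (metis)
      qed
    qed
    show ?thesis
      using A row col by (intro exI[of _ A] exI[of _ B]) (auto simp: B_def)
  qed

  have lower: "Cpq p q * T \<le> row_norm m n mu nu p q b' + t * col_norm m n mu nu p q c'"
    if bc: "\<forall>i\<in>{1..m}. \<forall>j\<in>{1..n}. a i j = b' i j + c' i j" for b' c'
  proof -
    define Wb where "Wb = row_norm m n mu nu p q b'"
    define Wc where "Wc = col_norm m n mu nu p q c'"
    have Wb0: "Wb \<ge> 0" "Wc \<ge> 0" using rn0 cn0 by (auto simp: Wb_def Wc_def)
    have "T \<le> (Wb + t * Wc) / Cpq p q"
      unfolding T
    proof (rule cSUP_least)
      show "Idx \<noteq> {}" using Idxne by auto
    next
      fix EF assume I: "EF \<in> Idx"
      obtain E F where EF: "EF = (E, F)" by force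
      have E: "E \<subseteq> {1..m}" "E \<noteq> {}" and F: "F \<subseteq> {1..n}" "F \<noteq> {}" using I by (auto simp: EF Idx_def)
      have Dp: "D EF > 0" using Dpos[OF I] .
      have lqa: "lq_norm m n mu nu q (mask (E \<times> F) a) \<le> lq_norm m n mu nu q (mask (E \<times> F) b') + lq_norm m n mu nu q (mask (E \<times> F) c')"
        by (rule lq_triangle[OF mu nu q1]) (use bc in \<open>auto simp: mask_def\<close>)
      have lqb: "b powr (1/q) * lq_norm m n mu nu q (mask (E \<times> F) b') \<le> Wb * (\<Sum>i\<in>E. mu i) powr (b / q)"
      proof -
        define S where "S = (\<Sum>i\<in>{1..m}. \<Sum>j\<in>{1..n}. (if i \<in> E \<and> j \<in> F then \<bar>b' i j\<bar> powr q else 0) * mu i * nu j)"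
        have lq: "lq_norm m n mu nu q (mask (E \<times> F) b') = S powr (1/q)"
          unfolding lq_norm_def S_def by (intro arg_cong2[where f="(powr)"] sum.cong refl) (auto simp: mask_def)
        have S0: "S \<ge> 0" unfolding S_def using mu nu by (intro sum_nonneg) (auto simp: less_imp_le)
        have "b * S \<le> Wb powr q * (\<Sum>i\<in>E. mu i) powr b"
          unfolding S_def Wb_def row_norm_def
          by (rule block_lower[OF Mfin Nfin(1) mu nu _ pp q b bq E(1)]) simp
        then show ?thesis unfolding lq using root_bound[OF b(1) S0 Wb0(1) muE[OF E] q] by simp
      qed
      have lqc: "b powr (1/q) * lq_norm m n mu nu q (mask (E \<times> F) c') \<le> Wc * (\<Sum>j\<in>F. nu j) powr (b / q)"
      proof -
        define S where "S = (\<Sum>j\<in>{1..n}. \<Sum>i\<in>{1..m}. (if j \<in> F \<and> i \<in> E then \<bar>c' i j\<bar> powr q else 0) * nu j * mu i)"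
        have "(\<Sum>i\<in>{1..m}. \<Sum>j\<in>{1..n}. \<bar>mask (E \<times> F) c' i j\<bar> powr q * mu i * nu j)
            = (\<Sum>j\<in>{1..n}. \<Sum>i\<in>{1..m}. \<bar>mask (E \<times> F) c' i j\<bar> powr q * mu i * nu j)"
          by (rule sum.swap)
        also have "\<dots> = S" unfolding S_def by (intro sum.cong refl) (auto simp: mask_def)
        finally have lq: "lq_norm m n mu nu q (mask (E \<times> F) c') = S powr (1/q)"
          unfolding lq_norm_def by simp
        have S0: "S \<ge> 0" unfolding S_def using mu nu by (intro sum_nonneg) (auto simp: less_imp_le)
        have "b * S \<le> Wc powr q * (\<Sum>j\<in>F. nu j) powr b"
          unfolding S_def Wc_def col_norm_def
          by (rule block_lower[OF Nfin Mfin(1) nu mu _ pp q b bq F(1)]) simp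
        then show ?thesis unfolding lq using root_bound[OF b(1) S0 Wb0(2) nuF[OF F] q] by simp
      qed
      have "Cpq p q * lq_norm m n mu nu q (mask (E \<times> F) a)
          \<le> b powr (1/q) * lq_norm m n mu nu q (mask (E \<times> F) b') + b powr (1/q) * lq_norm m n mu nu q (mask (E \<times> F) c')"
        using lqa Cpos unfolding Cpq by (simp add: distrib_left[symmetric])
      also have "\<dots> \<le> Wb * (\<Sum>i\<in>E. mu i) powr (b / q) + t * Wc * ((\<Sum>j\<in>F. nu j) powr (b / q) / t)"
        using lqb lqc t by simp
      also have "\<dots> \<le> Wb * D EF + t * Wc * D EF"
        using Wb0 t by (intro add_mono mult_left_mono) (auto simp: D_def EF)
      finally have main: "Cpq p q * lq_norm m n mu nu q (mask (E \<times> F) a) \<le> (Wb + t * Wc) * D EF"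
        by (simp add: algebra_simps)
      show "trm EF \<le> (Wb + t * Wc) / Cpq p q"
        using main Dp Cpos by (simp add: trm_def EF divide_le_eq le_divide_eq mult.commute mult.left_commute)
    qed
    then show ?thesis using Cpos by (simp add: Wb_def Wc_def field_simps)
  qed

  have c1: "Cpq p q * T \<le> K_func m n mu nu p q t a"
    unfolding K
  proof (rule cInf_greatest)
    show "KS \<noteq> {}"
    proof -
      have "row_norm m n mu nu p q a + t * col_norm m n mu nu p q (\<lambda>i j. 0) \<in> KS"
        unfolding KS_def by force
      then show ?thesis by blast
    qed
  next
    fix x assume "x \<in> KS"
    then obtain b' c' where x: "x = row_norm m n mu nu p q b' + t * col_norm m n mu nu p q c'"
      and bc: "\<forall>i\<in>{1..m}. \<forall>j\<in>{1..n}. a i j = b' i j + c' i j"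
      unfolding KS_def by blast
    show "Cpq p q * T \<le> x" unfolding x by (rule lower[OF bc])
  qed
  have c2: "K_func m n mu nu p q t a \<le> 2 * T"
  proof -
    obtain A B where AB: "A \<union> B = {1..m} \<times> {1..n}" "A \<inter> B = {}"
      and r: "row_norm m n mu nu p q (mask A a) \<le> T" and c: "col_norm m n mu nu p q (mask B a) \<le> T / t"
      using decompT[OF T0 order_refl] by blast
    have "\<forall>i\<in>{1..m}. \<forall>j\<in>{1..n}. a i j = mask A a i j + mask B a i j"
      using AB by (auto simp: mask_def)
    hence "K_func m n mu nu p q t a \<le> row_norm m n mu nu p q (mask A a) + t * col_norm m n mu nu p q (mask B a)"
      by (rule K_le)
    also have "\<dots> \<le> T + t * (T / t)" using r c t by (intro add_mono mult_left_mono) auto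
    also have "\<dots> = 2 * T" using t by simp
    finally show ?thesis .
  qed
  have c3: "T \<le> 1 \<longrightarrow> (\<exists>A B. A \<union> B = {1..m} \<times> {1..n} \<and> A \<inter> B = {}
               \<and> row_norm m n mu nu p q (mask A a) \<le> 1
               \<and> col_norm m n mu nu p q (mask B a) \<le> 1 / t)"
    using decompT[of 1] by simp
  show ?thesis using c1 c2 c3 unfolding T_def by blast
qed


end
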